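(* Let $N\ge 4$ be even and let $P_1,\dots,P_N$ be an $N$-periodic billiard trajectory in $E$, with outer polygon $P_1',\dots,P_N'$. For $j=1,2$ let $P'^{-1}_{j,i}=f_j+\dfrac{P_i'-f_j}{|P_i'-f_j|^2}$ be the inversion of $P_i'$ in the unit circle centered at $f_j$, and let $A_j'^\dagger$ be the signed area of the polygon $P'^{-1}_{j,1},\dots,P'^{-1}_{j,N}$. Then $A_1'^\dagger=A_2'^\dagger$, i.e. $A_1'^\dagger/A_2'^\dagger=1$.
   Context: Let $E$ be the ellipse $x^2/a^2+y^2/b^2=1$ with $a>b>0$, center $O=(0,0)$ and foci $f_1=(-\sqrt{a^2-b^2},0)$, $f_2=(\sqrt{a^2-b^2},0)$. An $N$-periodic billiard trajectory is a convex polygon with vertices $P_1,\dots,P_N\in E$ (indices mod $N$), listed counterclockwise and winding once around $O$, with $P_i\neq P_{i+1}$, such that at every vertex $P_i$ the normal line to $E$ at $P_i$ bisects the angle $\angle P_{i-1}P_iP_{i+1}$, and all of whose sides are tangent to a common ellipse confocal with $E$. Its outer polygon has vertices $P_i'$ = intersection of the tangent lines to $E$ at $P_i$ and at $P_{i+1}$. The signed area of a polygon with vertices $W_i=(x_i,y_i)$, $i=1,\dots,N$ (indices mod $N$), is $S=\tfrac12\sum_{i=1}^N (x_iy_{i+1}-x_{i+1}y_i)$. *)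

theory Defs
  imports "HOL-Analysis.Analysis"
begin

type_synonym pt = "real \<times> real"

definition cross :: "pt \<Rightarrow> pt \<Rightarrow> real" where
  "cross u v = fst u * snd v - snd u * fst v"

definition on_ellipse :: "real \<Rightarrow> real \<Rightarrow> pt \<Rightarrow> bool" where
  "on_ellipse a b p \<longleftrightarrow> (fst p)\<^sup>2 / a\<^sup>2 + (snd p)\<^sup>2 / b\<^sup>2 = 1"

definition focus1 :: "real \<Rightarrow> real \<Rightarrow> pt" where
  "focus1 a b = (- sqrt (a\<^sup>2 - b\<^sup>2), 0)"
definition focus2 :: "real \<Rightarrow> real \<Rightarrow> pt" where
  "focus2 a b = (sqrt (a\<^sup>2 - b\<^sup>2), 0)"

definition ell_normal :: "real \<Rightarrow> real \<Rightarrow> pt \<Rightarrow> pt" where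
  "ell_normal a b p = (fst p / a\<^sup>2, snd p / b\<^sup>2)"

definition on_tangent :: "real \<Rightarrow> real \<Rightarrow> pt \<Rightarrow> pt \<Rightarrow> bool" where
  "on_tangent a b p q \<longleftrightarrow> fst q * fst p / a\<^sup>2 + snd q * snd p / b\<^sup>2 = 1"

definition unitv :: "pt \<Rightarrow> pt" where
  "unitv v = (fst v / sqrt ((fst v)\<^sup>2 + (snd v)\<^sup>2), snd v / sqrt ((fst v)\<^sup>2 + (snd v)\<^sup>2))"

text \<open>The line through p and q is tangent to the ellipse x^2/al^2 + y^2/be^2 = 1:
  writing the line as u x + v y = w, the tangency condition is al^2 u^2 + be^2 v^2 = w^2.\<close>
definition line_tangent_ellipse :: "real \<Rightarrow> real \<Rightarrow> pt \<Rightarrow> pt \<Rightarrow> bool" where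
  "line_tangent_ellipse al be p q \<longleftrightarrow>
     (let u = snd q - snd p; v = fst p - fst q; w = u * fst p + v * snd p
      in al\<^sup>2 * u\<^sup>2 + be\<^sup>2 * v\<^sup>2 = w\<^sup>2)"

text \<open>N-periodic billiard trajectory, vertices P 0, ..., P (N-1), indices mod N.\<close>
definition billiard_traj :: "real \<Rightarrow> real \<Rightarrow> nat \<Rightarrow> (nat \<Rightarrow> pt) \<Rightarrow> bool" where
  "billiard_traj a b N P \<longleftrightarrow>
     (\<forall>i<N. on_ellipse a b (P i)) \<and>
     (\<forall>i<N. P i \<noteq> P ((i + 1) mod N)) \<and>
     \<comment> \<open>convex, counterclockwise: every other vertex strictly to the left of each side\<close>
     (\<forall>i<N. \<forall>j<N. j \<noteq> i \<and> j \<noteq> (i + 1) mod N \<longrightarrow>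
         cross (P ((i + 1) mod N) - P i) (P j - P i) > 0) \<and>
     \<comment> \<open>winds once around O: O strictly to the left of each side\<close>
     (\<forall>i<N. cross (P ((i + 1) mod N) - P i) (0 - P i) > 0) \<and>
     \<comment> \<open>reflection law: the normal line at P i bisects the angle at P i\<close>
     (\<forall>i<N. cross (unitv (P ((i + N - 1) mod N) - P i) + unitv (P ((i + 1) mod N) - P i))
                    (ell_normal a b (P i)) = 0) \<and>
     \<comment> \<open>all sides tangent to a common confocal ellipse\<close>
     (\<exists>al be. al > 0 \<and> be > 0 \<and> al\<^sup>2 - be\<^sup>2 = a\<^sup>2 - b\<^sup>2 \<and>
        (\<forall>i<N. line_tangent_ellipse al be (P i) (P ((i + 1) mod N))))"

definition outer_vertex :: "real \<Rightarrow> real \<Rightarrow> nat \<Rightarrow> (nat \<Rightarrow> pt) \<Rightarrow> nat \<Rightarrow> pt" where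
  "outer_vertex a b N P i = (THE q. on_tangent a b (P i) q \<and> on_tangent a b (P ((i + 1) mod N)) q)"

definition invert :: "pt \<Rightarrow> pt \<Rightarrow> pt" where
  "invert f q = f + (1 / ((fst (q - f))\<^sup>2 + (snd (q - f))\<^sup>2)) *\<^sub>R (q - f)"

definition signed_area :: "nat \<Rightarrow> (nat \<Rightarrow> pt) \<Rightarrow> real" where
  "signed_area N W = (1/2) * (\<Sum>i<N. fst (W i) * snd (W ((i + 1) mod N))
                                    - fst (W ((i + 1) mod N)) * snd (W i))"

end

theory Submission
  imports Defs
begin

lemma mono_chord:
  fixes p q s t s' t' :: real
  assumes p: "0<p" "p\<le>1" and q: "0<q" "q\<le>1"
  and R: "p^2 * cos((s+t)/2)^2 + q^2 * sin((s+t)/2)^2 = cos((t-s)/2)^2"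
  and R': "p^2 * cos((s'+t')/2)^2 + q^2 * sin((s'+t')/2)^2 = cos((t'-s')/2)^2"
  and h: "0 < t-s" "t-s < pi" "0<t'-s'" "t'-s'<pi" "s \<le> s'" "t' \<le> t"
  shows "s = s' \<and> t = t'"
proof -
  define m where "m = (s+t)/2"
  define d where "d = (t-s)/2"
  define m' where "m' = (s'+t')/2"
  define d' where "d' = (t'-s')/2"
  define \<delta> where "\<delta> = m - m'"
  have dd: "0 < d" "d < pi/2" "0 < d'" "d' < pi/2" "\<bar>\<delta>\<bar> + d' \<le> d"
    using h unfolding d_def d'_def \<delta>_def m_def m'_def by (auto simp: abs_if field_simps)
  have cd: "cos d > 0" "cos d' > 0" "sin d' > 0"
    using dd by (auto intro!: cos_gt_zero_pi sin_gt_zero)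
  have FX: "p^2 * cos m ^2 + q^2 * sin m^2 = cos d ^2" using R by (simp add: m_def d_def)
  have FY: "p^2 * cos m' ^2 + q^2 * sin m'^2 = cos d' ^2" using R' by (simp add: m'_def d'_def)
  define A where "A = p^2 * cos m * cos m' + q^2 * sin m * sin m'"
  have lag: "A^2 + (p*q*(cos m * sin m' - sin m * cos m'))^2 = cos d^2 * cos d'^2"
    unfolding A_def FX[symmetric] FY[symmetric] by algebra
  have mm: "m = m' + \<delta>" by (simp add: \<delta>_def)
  have A5: "A = cos d'^2 * cos \<delta> + (q^2-p^2) * sin m' * cos m' * sin \<delta>"
    unfolding A_def mm FY[symmetric] by (simp add: cos_add sin_add algebra_simps power2_eq_square)
  have sc: "sin m'^2 + cos m'^2 = 1" by simp
  have sd: "sin d'^2 = 1 - cos d'^2" by (simp add: sin_squared_eq)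
  have ineq0: "((q^2-p^2) * sin m' * cos m')^2 \<le> (cos d' * sin d')^2"
  proof -
    have e: "(cos d' * sin d')^2 - ((q^2-p^2) * sin m' * cos m')^2
      = p^2 * (1-p^2) * cos m' ^ 4 + q^2 * (1-q^2) * sin m' ^ 4 + (p^2 * (1-p^2) + q^2 * (1-q^2)) * cos m' ^ 2 * sin m' ^ 2"
    proof -
      have h1: "(cos d' * sin d')^2 = (p^2 * cos m' ^ 2 + q^2 * sin m' ^ 2) * ((sin m' ^ 2 + cos m' ^ 2) - (p^2 * cos m' ^ 2 + q^2 * sin m' ^ 2))"
        by (simp add: power_mult_distrib sd FY)
      show ?thesis unfolding h1 by algebra
    qed
    have "p^2 \<le> 1" "q^2 \<le> 1" using p q by (auto simp: power_le_one)
    then have "0 \<le> p^2 * (1-p^2) * cos m' ^ 4 + q^2 * (1-q^2) * sin m' ^ 4 + (p^2 * (1-p^2) + q^2 * (1-q^2)) * cos m' ^ 2 * sin m' ^ 2"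
      by (intro add_nonneg_nonneg mult_nonneg_nonneg) auto
    with e show ?thesis by linarith
  qed
  then have ineq: "\<bar>(q^2-p^2) * sin m' * cos m'\<bar> \<le> cos d' * sin d'"
  proof -
    have "\<bar>(q^2-p^2) * sin m' * cos m'\<bar> \<le> \<bar>cos d' * sin d'\<bar>" using ineq0 by (simp only: abs_le_square_iff)
    moreover have "\<bar>cos d' * sin d'\<bar> = cos d' * sin d'" using cd by (simp add: abs_mult)
    ultimately show ?thesis by simp
  qed
  have absin: "sin \<bar>\<delta>\<bar> = \<bar>sin \<delta>\<bar>"
    using dd sin_ge_zero[of \<delta>] sin_ge_zero[of "-\<delta>"] by (cases "\<delta> \<ge> 0") auto
  have "A \<ge> cos d'^2 * cos \<delta> - cos d' * sin d' * \<bar>sin \<delta>\<bar>"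
  proof -
    have "\<bar>(q^2-p^2) * sin m' * cos m' * sin \<delta>\<bar> \<le> cos d' * sin d' * \<bar>sin \<delta>\<bar>"
      using ineq by (simp add: abs_mult mult_right_mono)
    then show ?thesis unfolding A5 by linarith
  qed
  also have "cos d'^2 * cos \<delta> - cos d' * sin d' * \<bar>sin \<delta>\<bar> = cos d' * cos (d' + \<bar>\<delta>\<bar>)"
    by (simp add: cos_add absin power2_eq_square algebra_simps)
  also have "cos d' * cos (d' + \<bar>\<delta>\<bar>) \<ge> cos d' * cos d"
    using cd dd by (intro mult_left_mono) (auto simp: cos_mono_le_eq)
  finally have Age: "A \<ge> cos d' * cos d" .
  then have "A^2 \<ge> (cos d' * cos d)^2" using cd by (intro power_mono) auto
  moreover have "(cos d' * cos d)^2 = cos d^2 * cos d'^2" by (simp add: power_mult_distrib)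
  moreover note zero_le_power2[of "p*q*(cos m * sin m' - sin m * cos m')"]
  ultimately have z: "(p*q*(cos m * sin m' - sin m * cos m'))^2 = 0" and A2: "A^2 = (cos d' * cos d)^2"
    using lag by linarith+
  have "cos m * sin m' - sin m * cos m' = 0" using z p q by simp
  moreover have "sin (m' - m) = cos m * sin m' - sin m * cos m'" by (simp add: sin_diff algebra_simps)
  ultimately have "sin (m' - m) = 0" by simp
  moreover have "\<delta> = -(m' - m)" by (simp add: \<delta>_def)
  ultimately have "sin \<delta> = 0" by (simp only: sin_minus)
  moreover have "\<bar>\<delta>\<bar> < pi" using dd by linarith
  ultimately have d0: "\<delta> = 0" using sin_eq_0_pi[of \<delta>] by (simp add: abs_less_iff)
  have pos: "0 < cos d' * cos d" using cd by simp
  then have "A \<ge> 0" using Age by linarith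
  then have "A = cos d' * cos d" using A2 less_imp_le[OF pos] by (simp only: power2_eq_iff_nonneg)
  moreover have "A = cos d' * cos d'" using A5 d0 by (simp add: power2_eq_square)
  ultimately have "cos d' = cos d" using cd by simp
  then have "d' = d" using dd by - (rule cos_inj_pi, linarith+)
  then show ?thesis using d0 unfolding d_def d'_def \<delta>_def m_def m'_def by auto
qed


definition Rc :: "real \<Rightarrow> real \<Rightarrow> real \<Rightarrow> real \<Rightarrow> bool" where
  "Rc p q x y \<longleftrightarrow> p^2 * cos((x+y)/2)^2 + q^2 * sin((x+y)/2)^2 = cos((y-x)/2)^2"

lemma Rc_shift: "Rc p q x y \<Longrightarrow> Rc p q (x+pi) (y+pi)"
proof -
  have e: "(x+pi+(y+pi))/2 = (x+y)/2 + pi" by (simp add: field_simps)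
  assume "Rc p q x y" then show ?thesis unfolding Rc_def e by (simp add: cos_add sin_add)
qed

lemma interleave:
  fixes t u :: "nat \<Rightarrow> real"
  assumes p: "0<p" "p\<le>1" and q: "0<q" "q\<le>1"
  and tt: "\<And>i. t i < t (Suc i) \<and> t (Suc i) < t i + pi" and tR: "\<And>i. Rc p q (t i) (t (Suc i))"
  and uu: "\<And>i. u i < u (Suc i) \<and> u (Suc i) < u i + pi" and uR: "\<And>i. Rc p q (u i) (u (Suc i))"
  and h: "t m \<le> u j" "u j < t (Suc m)"
  shows "t (Suc m) \<le> u (Suc j) \<and> u (Suc j) < t (Suc (Suc m)) \<and> (u j = t m \<longrightarrow> u (Suc j) = t (Suc m))"
proof -
  have M: "x = x' \<and> y = y'" if "Rc p q x y" "Rc p q x' y'" "0 < y-x" "y-x < pi" "0<y'-x'" "y'-x'<pi" "x \<le> x'" "y' \<le> y" for x y x' y'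
    using mono_chord[OF p q, of x y x' y'] that unfolding Rc_def by blast
  have a1: "t (Suc m) \<le> u (Suc j)"
  proof (rule ccontr)
    assume nt: "\<not> t (Suc m) \<le> u (Suc j)"
    then have "t m = u j" using M[OF tR[of m] uR[of j]] tt[of m] uu[of j] h by force
    then show False using M[OF tR[of m] uR[of j]] tt[of m] uu[of j] h nt by force
  qed
  have a2: "u (Suc j) < t (Suc (Suc m))"
  proof (rule ccontr)
    assume "\<not> ?thesis"
    then show False using M[OF uR[of j] tR[of "Suc m"]] tt[of "Suc m"] uu[of j] h by force
  qed
  have a3: "u (Suc j) = t (Suc m)" if "u j = t m"
  proof (rule ccontr)
    assume "\<not> ?thesis"
    with a1 have "t (Suc m) < u (Suc j)" by simp
    then show False using M[OF uR[of j] tR[of m]] tt[of m] uu[of j] that by force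
  qed
  show ?thesis using a1 a2 a3 by blast
qed

lemma sym_lemma:
  fixes t :: "nat \<Rightarrow> real" and N :: nat
  assumes p: "0<p" "p\<le>1" and q: "0<q" "q\<le>1"
  and tt: "\<And>i. t i < t (Suc i) \<and> t (Suc i) < t i + pi" and tR: "\<And>i. Rc p q (t i) (t (Suc i))"
  and per: "\<And>i. t (i + N) = t i + 2*pi" and ev: "even N"
  shows "t (j + N div 2) = t j + pi"
proof -
  define u where "u i = t i + pi" for i
  have uu: "u i < u (Suc i) \<and> u (Suc i) < u i + pi" for i using tt[of i] by (simp add: u_def)
  have uR: "Rc p q (u i) (u (Suc i))" for i using tR[of i] Rc_shift by (simp add: u_def)
  have sm: "strict_mono t" using tt by (intro strict_monoI_Suc) auto
  have tN: "t N = t 0 + 2*pi" using per[of 0] by simp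
  define l where "l = (LEAST i. t 0 + pi < t i)"
  have ex: "t 0 + pi < t N" using tN by simp
  have l1: "t 0 + pi < t l" unfolding l_def by (rule LeastI[of _ N]) (rule ex)
  have l2: "\<not> (t 0 + pi < t i)" if "i < l" for i using not_less_Least[OF that[unfolded l_def]] l_def by simp
  have lpos: "l > 0" using l1 by (cases l) auto
  define k where "k = l - 1"
  have k0: "t k \<le> u 0" "u 0 < t (Suc k)" using l1 l2[of k] lpos by (auto simp: k_def u_def)
  have cl: "t (k + j) \<le> u j \<and> u j < t (Suc (k + j))" for j
  proof (induction j)
    case 0 then show ?case using k0 by simp
  next
    case (Suc j)
    then show ?case using interleave[where t=t and u=u and m="k+j" and j=j, OF p q tt tR uu uR] by simp
  qed
  have c0: "t k \<le> t 0 + pi" "t 0 + pi < t (Suc k)" using cl[of 0] by (auto simp: u_def)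
  have ck: "t (k+k) \<le> t k + pi" using cl[of k] by (auto simp: u_def)
  have ck1: "t (Suc k) + pi < t (Suc (k + Suc k))" using cl[of "Suc k"] by (auto simp: u_def)
  have A1: "t (k+k) \<le> t N" using ck c0 tN by linarith
  have A2: "t N < t (Suc (k + Suc k))" using ck1 c0 tN by linarith
  have "k + k \<le> N" using A1 sm by (metis not_le strict_mono_less)
  moreover have "N < Suc (k + Suc k)" using A2 sm by (metis not_le strict_mono_less_eq)
  ultimately have Nk: "N = k + k" using ev by presburger
  then have "t k = u 0" using ck c0 tN by (simp add: u_def)
  then have ex2: "t (k + j) = u j" for j
  proof (induction j)
    case 0 then show ?case by simp
  next
    case (Suc j)
    then have "t (k+j) = u j" by simp
    then show ?case using interleave[where t=t and u=u and m="k+j" and j=j, OF p q tt tR uu uR] tt[of "k+j"] by simp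
  qed
  have "N div 2 = k" using Nk by simp
  then show ?thesis using ex2[of j] by (simp add: u_def add.commute)
qed


definition ep :: "real \<Rightarrow> real \<Rightarrow> real \<Rightarrow> pt" where
  "ep a b x = (a * cos x, b * sin x)"

lemma on_ellipse_ep:
  assumes "a > 0" "b > 0" "on_ellipse a b P"
  shows "\<exists>\<theta>. 0 \<le> \<theta> \<and> \<theta> < 2*pi \<and> P = ep a b \<theta>"
proof -
  have "(fst P / a)^2 + (snd P / b)^2 = 1" using assms by (simp add: on_ellipse_def power_divide)
  then obtain t where t: "0 \<le> t" "t < 2*pi" "fst P / a = cos t" "snd P / b = sin t"
    using sincos_total_2pi by blast
  then have "P = ep a b t" using assms by (auto simp: ep_def field_simps prod_eq_iff)
  with t show ?thesis by blast
qed

lemma cross_ep0: "cross (ep a b s) (ep a b t) = a*b* sin(t-s)"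
  by (simp add: cross_def ep_def sin_diff algebra_simps)

lemma cross_ep: "cross (ep a b t - ep a b s) (ep a b f - ep a b s) = a*b*(sin(t-s) - sin(f-s) - sin(t-f))"
  by (simp add: cross_def ep_def sin_diff algebra_simps)

lemma sin_subadd:
  fixes x y :: real
  assumes "0 < x" "0 \<le> y" "x + y < pi"
  shows "sin (x+y) \<le> sin x + sin y"
proof -
  have "sin x \<ge> 0" "sin y \<ge> 0" using assms by (auto intro!: sin_ge_zero)
  moreover have "cos x \<le> 1" "cos y \<le> 1" by auto
  ultimately have "sin x * cos y \<le> sin x * 1" "cos x * sin y \<le> 1 * sin y"
    using mult_left_mono[of "cos y" 1 "sin x"] mult_right_mono[of "cos x" 1 "sin y"] by auto
  then show ?thesis by (simp add: sin_add)
qed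

lemma ep_eq_D: "a > 0 \<Longrightarrow> b > 0 \<Longrightarrow> ep a b x = ep a b y \<Longrightarrow> cos x = cos y \<and> sin x = sin y"
  by (simp add: ep_def)

lemma ep_shift: "a > 0 \<Longrightarrow> b > 0 \<Longrightarrow> ep a b x = ep a b y \<Longrightarrow> ep a b (x+z) = ep a b (y+z)"
  by (simp add: ep_def cos_add sin_add)

lemma ep_2pi: "ep a b (x + 2*pi) = ep a b x"
  by (simp add: ep_def)

lemma ep_pi: "ep a b (x + pi) = - ep a b x"
  by (simp add: ep_def)

lemma tangent_ep:
  assumes ab: "a > 0" "b > 0" and st: "0 < t - s" "t - s < pi"
  and T: "line_tangent_ellipse al be (ep a b s) (ep a b t)"
  shows "Rc (al/a) (be/b) s t"
proof -
  define m where "m = (s+t)/2"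
  define d where "d = (t-s)/2"
  have s: "s = m - d" and t: "t = m + d" by (simp_all add: m_def d_def field_simps)
  have sd: "sin d > 0" using st by (auto simp: d_def intro!: sin_gt_zero)
  have u: "b * sin t - b * sin s = 2*b*cos m* sin d" unfolding s t by (simp add: sin_add sin_diff algebra_simps)
  have v: "a * cos s - a * cos t = 2*a* sin m* sin d" unfolding s t by (simp add: cos_add cos_diff algebra_simps)
  have w: "(b * sin t - b * sin s) * (a * cos s) + (a * cos s - a * cos t) * (b * sin s) = 2*a*b* sin d*cos d"
  proof -
    have "(b * sin t - b * sin s) * (a * cos s) + (a * cos s - a * cos t) * (b * sin s) = a * b * sin (t - s)"
      by (simp add: sin_diff algebra_simps)
    also have "t - s = 2 * d" by (simp add: d_def)
    finally show ?thesis by (simp add: sin_double)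
  qed
  have E0: "al^2 * (b * sin t - b * sin s)^2 + be^2 * (a * cos s - a * cos t)^2 = (2*a*b* sin d*cos d)^2"
    using T unfolding line_tangent_ellipse_def Let_def ep_def fst_conv snd_conv w .
  have E: "al^2 * (2*b*cos m* sin d)^2 + be^2 * (2*a* sin m* sin d)^2 = (2*a*b* sin d*cos d)^2"
    using E0 unfolding u v .
  have "(4*a^2*b^2* sin d^2) * ((al/a)^2 * cos m^2 + (be/b)^2 * sin m^2) = (4*a^2*b^2* sin d^2) * cos d^2"
  proof -
    have 1: "al^2 = a^2 * (al/a)^2" "be^2 = b^2 * (be/b)^2" using ab by (simp_all add: power_divide)
    have E': "a^2 * (al/a)^2 * (2*b*cos m* sin d)^2 + b^2 * (be/b)^2 * (2*a* sin m* sin d)^2 = (2*a*b* sin d*cos d)^2"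
      using E unfolding 1[symmetric] .
    show ?thesis using E' by (simp add: power_mult_distrib algebra_simps)
  qed
  moreover have nz: "4*a^2*b^2* sin d^2 \<noteq> 0" using ab sd by simp
  ultimately have "(al/a)^2 * cos m^2 + (be/b)^2 * sin m^2 = cos d^2" using mult_left_cancel[OF nz] by blast
  then show ?thesis unfolding Rc_def m_def d_def .
qed

definition osol :: "real \<Rightarrow> real \<Rightarrow> pt \<Rightarrow> pt \<Rightarrow> pt" where
  "osol a b X Y = (a^2*(snd Y - snd X)/cross X Y, b^2*(fst X - fst Y)/cross X Y)"

lemma the_outer:
  assumes ab: "a > 0" "b > 0" and c: "cross X Y \<noteq> 0"
  shows "(THE q. on_tangent a b X q \<and> on_tangent a b Y q) = osol a b X Y"
proof (rule the_equality)
  have "fst (osol a b X Y) * fst Z / a^2 + snd (osol a b X Y) * snd Z / b^2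
     = ((snd Y - snd X) * fst Z + (fst X - fst Y) * snd Z) / cross X Y" for Z
    using ab by (simp add: osol_def add_divide_distrib)
  moreover have "((snd Y - snd X) * fst X + (fst X - fst Y) * snd X) = cross X Y"
    "((snd Y - snd X) * fst Y + (fst X - fst Y) * snd Y) = cross X Y"
    by (simp_all add: cross_def algebra_simps)
  ultimately show "on_tangent a b X (osol a b X Y) \<and> on_tangent a b Y (osol a b X Y)"
    using c by (simp add: on_tangent_def)
next
  fix q assume h: "on_tangent a b X q \<and> on_tangent a b Y q"
  then have e1: "fst q * fst X * b^2 + snd q * snd X * a^2 = a^2*b^2"
    and e2: "fst q * fst Y * b^2 + snd q * snd Y * a^2 = a^2*b^2"
    using ab by (auto simp: on_tangent_def field_simps)
  have "fst q * cross X Y * b^2 = a^2*b^2*(snd Y - snd X)"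
  proof -
    have "fst q * cross X Y * b^2 = snd Y * (fst q * fst X * b^2 + snd q * snd X * a^2) - snd X * (fst q * fst Y * b^2 + snd q * snd Y * a^2)"
      by (simp add: cross_def algebra_simps)
    then show ?thesis unfolding e1 e2 by (simp add: algebra_simps)
  qed
  then have "(fst q * cross X Y - a^2*(snd Y - snd X)) * b^2 = 0" by algebra
  then have "fst q * cross X Y = a^2*(snd Y - snd X)" using ab by simp
  then have 1: "fst q = a^2*(snd Y - snd X)/cross X Y" using c by (simp add: eq_divide_eq)
  have "snd q * cross X Y * a^2 = a^2*b^2*(fst X - fst Y)"
  proof -
    have "snd q * cross X Y * a^2 = fst X * (fst q * fst Y * b^2 + snd q * snd Y * a^2) - fst Y * (fst q * fst X * b^2 + snd q * snd X * a^2)"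
      by (simp add: cross_def algebra_simps)
    then show ?thesis unfolding e1 e2 by (simp add: algebra_simps)
  qed
  then have "(snd q * cross X Y - b^2*(fst X - fst Y)) * a^2 = 0" by algebra
  then have "snd q * cross X Y = b^2*(fst X - fst Y)" using ab by simp
  then have 2: "snd q = b^2*(fst X - fst Y)/cross X Y" using c by (simp add: eq_divide_eq)
  show "q = osol a b X Y" using 1 2 by (simp add: osol_def prod_eq_iff)
qed

lemma osol_neg: "osol a b (-X) (-Y) = - osol a b X Y"
proof -
  have "cross (-X) (-Y) = cross X Y" by (simp add: cross_def)
  moreover have "a^2*(snd (-Y) - snd (-X)) = - (a^2*(snd Y - snd X))" "b^2*(fst (-X) - fst (-Y)) = - (b^2*(fst X - fst Y))"
    by (simp_all add: algebra_simps)
  ultimately show ?thesis unfolding osol_def by simp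
qed

lemma invert_neg: "invert (-f) (-q) = - invert f q"
proof -
  have "(fst (-q - -f))\<^sup>2 + (snd (-q - -f))\<^sup>2 = (fst (q - f))\<^sup>2 + (snd (q - f))\<^sup>2"
    by (simp add: power2_eq_square algebra_simps)
  then show ?thesis unfolding invert_def by (simp add: algebra_simps scaleR_right_diff_distrib)
qed

lemma focus_neg: "focus1 a b = - focus2 a b" by (simp add: focus1_def focus2_def)

lemma sum_shift_mod:
  fixes g :: "nat \<Rightarrow> real"
  assumes "N > 0"
  shows "(\<Sum>i<N. g ((i + k) mod N)) = (\<Sum>i<N. g i)"
proof -
  have inj: "inj_on (\<lambda>i. (i + k) mod N) {..<N}"
  proof (rule inj_onI)
    fix i j assume "i \<in> {..<N}" "j \<in> {..<N}" "(i + k) mod N = (j + k) mod N"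
    have bk: "((x + k) mod N + (N - k mod N)) mod N = x" if "x < N" for x
    proof -
      have "((x + k) mod N + (N - k mod N)) mod N = (x + k + (N - k mod N)) mod N"
        by (simp add: mod_add_left_eq)
      also have "x + k + (N - k mod N) = x + N + N * (k div N)"
        using mod_less_divisor[OF assms, of k] mod_mult_div_eq[of k N] by arith
      also have "(x + N + N * (k div N)) mod N = x" using that by simp
      finally show ?thesis .
    qed
    then show "i = j" using bk \<open>i \<in> {..<N}\<close> \<open>j \<in> {..<N}\<close> \<open>(i + k) mod N = (j + k) mod N\<close>
      by (metis lessThan_iff)
  qed
  have "(\<lambda>i. (i + k) mod N) ` {..<N} \<subseteq> {..<N}" using assms by auto
  then have "(\<lambda>i. (i + k) mod N) ` {..<N} = {..<N}" using inj by (simp add: endo_inj_surj)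
  then have "bij_betw (\<lambda>i. (i + k) mod N) {..<N} {..<N}" using inj by (simp add: bij_betw_def)
  then show ?thesis by (rule sum.reindex_bij_betw)
qed


theorem mainTheorem5:
  fixes a b :: real and N :: nat and P :: "nat \<Rightarrow> real \<times> real"
  assumes "a > b" and "b > 0" and "N \<ge> 4" and "even N"
    and "billiard_traj a b N P"
  shows "signed_area N (\<lambda>i. invert (focus1 a b) (outer_vertex a b N P i))
       = signed_area N (\<lambda>i. invert (focus2 a b) (outer_vertex a b N P i))"
proof -
  have ab: "a > 0" "b > 0" using assms by auto
  have N0: "N > 0" using assms by simp
  note BT = assms(5)[unfolded billiard_traj_def]
  have onE: "\<forall>i<N. on_ellipse a b (P i)" using BT by blast
  have conv: "\<forall>i<N. \<forall>j<N. j \<noteq> i \<and> j \<noteq> (i + 1) mod N \<longrightarrow> cross (P ((i + 1) mod N) - P i) (P j - P i) > 0"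
    using BT by blast
  have wind: "\<forall>i<N. cross (P ((i + 1) mod N) - P i) (0 - P i) > 0" using BT by blast
  obtain al be where albe: "al > 0" "be > 0" "al^2 - be^2 = a^2 - b^2"
    and tang: "\<forall>i<N. line_tangent_ellipse al be (P i) (P ((i + 1) mod N))" using BT by blast
  have crossP: "cross (P i) (P ((i+1) mod N)) > 0" if "i < N" for i
    using wind that by (auto simp: cross_def algebra_simps)
  have "\<forall>i. \<exists>th. i < N \<longrightarrow> 0 \<le> th \<and> th < 2*pi \<and> P i = ep a b th"
    using on_ellipse_ep[OF ab] onE by metis
  then obtain th where th: "\<And>i. i < N \<Longrightarrow> 0 \<le> th i \<and> th i < 2*pi \<and> P i = ep a b (th i)" by metis
  define dl where "dl i = (if th ((i+1) mod N) - th i > 0 then th ((i+1) mod N) - th i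
      else th ((i+1) mod N) - th i + 2*pi)" for i
  have dl: "0 < dl i \<and> dl i < pi \<and> ep a b (th i + dl i) = P ((i+1) mod N)" if "i < N" for i
  proof -
    define th' where "th' = th ((i+1) mod N)"
    have i1: "(i+1) mod N < N" using N0 by simp
    note t1 = th[OF that] and t2 = th[OF i1, folded th'_def]
    have e: "ep a b (th i + dl i) = ep a b th'"
    proof (cases "th' - th i > 0")
      case True then show ?thesis by (simp add: dl_def th'_def)
    next
      case False
      then have "th i + dl i = th' + 2*pi" by (simp add: dl_def th'_def)
      then show ?thesis by (simp add: ep_2pi)
    qed
    have sdl: "sin (dl i) = sin (th' - th i)"
      by (cases "th' - th i > 0") (simp_all add: dl_def th'_def)
    have "cross (P i) (P ((i+1) mod N)) = a * b * sin (th' - th i)"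
      using t1 t2 by (simp add: cross_ep0)
    moreover have "a * b > 0" using ab by simp
    ultimately have "0 < a * b * sin (th' - th i)" "0 < a * b" using crossP[OF that] by auto
    then have sp: "sin (dl i) > 0" using sdl zero_less_mult_pos by metis
    have d0: "0 < dl i" "dl i \<le> 2*pi" using t1 t2 by (auto simp: dl_def th'_def)
    have "dl i < pi"
    proof (rule ccontr)
      assume "\<not> dl i < pi"
      then have "sin (dl i) \<le> 0"
        using d0 sin_le_zero[of "dl i"] by (cases "dl i = 2*pi") auto
      then show False using sp by simp
    qed
    then show ?thesis using d0 e t2 by (simp add: th'_def)
  qed
  define t where "t i = th 0 + (\<Sum>j<i. dl (j mod N))" for i
  have tS: "t (Suc i) = t i + dl (i mod N)" for i by (simp add: t_def)
  have tt: "t i < t (Suc i) \<and> t (Suc i) < t i + pi" for i using dl[of "i mod N"] N0 tS[of i] by simp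
  have sm: "strict_mono t" using tt by (intro strict_monoI_Suc) auto
  have tP: "ep a b (t i) = P (i mod N)" for i
  proof (induction i)
    case 0 then show ?case using th[OF N0] by (simp add: t_def)
  next
    case (Suc i)
    have im: "i mod N < N" using N0 by simp
    have "ep a b (t (Suc i)) = ep a b (th (i mod N) + dl (i mod N))"
      unfolding tS using ep_shift[OF ab, of "t i" "th (i mod N)"] Suc th[OF im] by simp
    also have "\<dots> = P ((i mod N + 1) mod N)" using dl[OF im] by simp
    also have "(i mod N + 1) mod N = Suc i mod N" by (simp add: mod_Suc_eq)
    finally show ?case .
  qed
  define S where "S = t N - t 0"
  have tper: "t (i + N) = t i + S" for i
  proof (induction i)
    case 0 then show ?case by (simp add: S_def)
  next
    case (Suc i)
    have "t (Suc i + N) = t (i + N) + dl ((i + N) mod N)" using tS[of "i+N"] by simp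
    also have "(i + N) mod N = i mod N" by simp
    finally show ?case using Suc tS[of i] by simp
  qed
  have "ep a b (t N) = ep a b (t 0)" using tP[of N] tP[of 0] by simp
  then have "sin (t N) = sin (t 0) \<and> cos (t N) = cos (t 0)" using ep_eq_D[OF ab] by blast
  then obtain n :: int where n: "t N = t 0 + 2*pi*n" using sin_cos_eq_iff by blast
  have Spos: "S > 0" using sm N0 by (simp add: S_def strict_mono_less)
  then have n1: "n \<ge> 1" using n by (simp add: S_def zero_less_mult_iff)
  have S2: "S = 2*pi"
  proof (rule ccontr)
    assume "S \<noteq> 2*pi"
    then have "n \<noteq> 1" using n by (auto simp: S_def)
    then have "n \<ge> 2" using n1 by simp
    then have "2*pi*2 \<le> 2*pi*n" by (intro mult_left_mono) auto
    then have S4: "S \<ge> 4*pi" using n by (simp add: S_def)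
    define r where "r = (LEAST i. t 0 + 2*pi \<le> t i)"
    have exN: "t 0 + 2*pi \<le> t N" using S4 pi_gt_zero unfolding S_def by linarith
    have r1: "t 0 + 2*pi \<le> t r" unfolding r_def by (rule LeastI[of _ N]) (rule exN)
    have r2: "t i < t 0 + 2*pi" if "i < r" for i
      using not_less_Least[OF that[unfolded r_def]] r_def by simp
    have "r \<noteq> 0" using r1 pi_gt_zero by (cases r) auto
    moreover have "r \<noteq> 1" using r1 tt[of 0] by auto
    ultimately have r2': "r \<ge> 2" by simp
    have "t (N - 1) + pi > t N" using tt[of "N-1"] N0 by simp
    then have "t 0 + 2*pi \<le> t (N - 1)" using S4 pi_gt_zero unfolding S_def by linarith
    then have "r \<le> N - 1" unfolding r_def by (rule Least_le)
    then have rN: "r < N" using N0 by simp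
    define i where "i = r - 1"
    have iS: "Suc i = r" using r2' by (simp add: i_def)
    have iN: "i < N" using rN by (simp add: i_def)
    have "cross (P ((i + 1) mod N) - P i) (P 0 - P i) > 0"
      using conv iN N0 r2' rN by (auto simp: i_def)
    moreover have "P i = ep a b (t i)" "P ((i + 1) mod N) = ep a b (t r)" "P 0 = ep a b (t 0 + 2*pi)"
      using tP[of i] tP[of r] tP[of 0] iN rN iS by (simp_all add: ep_2pi)
    ultimately have pos: "a*b*(sin(t r - t i) - sin((t 0 + 2*pi) - t i) - sin(t r - (t 0 + 2*pi))) > 0"
      using cross_ep by metis
    have x: "0 < (t 0 + 2*pi) - t i" using r2[of i] iS by simp
    have y: "0 \<le> t r - (t 0 + 2*pi)" using r1 by simp
    have xy: "(t 0 + 2*pi - t i) + (t r - (t 0 + 2*pi)) < pi" using tt[of i] iS by simp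
    have "sin(t r - t i) \<le> sin((t 0 + 2*pi) - t i) + sin(t r - (t 0 + 2*pi))"
      using sin_subadd[OF x y xy] by simp
    then show False using pos mult_pos_pos[OF ab] by (simp add: zero_less_mult_iff)
  qed
  have per: "t (i + N) = t i + 2*pi" for i using tper S2 by simp
  define p where "p = al / a"
  define q where "q = be / b"
  have R: "Rc p q (t i) (t (Suc i))" for i
  proof -
    have im: "i mod N < N" using N0 by simp
    have "line_tangent_ellipse al be (P (i mod N)) (P ((i mod N + 1) mod N))" using tang im by blast
    moreover have "(i mod N + 1) mod N = Suc i mod N" by (simp add: mod_Suc_eq)
    ultimately have "line_tangent_ellipse al be (ep a b (t i)) (ep a b (t (Suc i)))"
      using tP[of i] tP[of "Suc i"] by simp
    then show ?thesis unfolding p_def q_def using tangent_ep[OF ab] tt[of i] by simp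
  qed
  have pq: "p \<le> 1 \<and> q \<le> 1"
  proof -
    define m where "m = (t 0 + t (Suc 0))/2"
    define d where "d = (t (Suc 0) - t 0)/2"
    have Rm: "p^2 * cos m ^ 2 + q^2 * sin m ^ 2 = cos d ^ 2" using R[of 0] by (simp add: Rc_def m_def d_def)
    have "sin d > 0" using tt[of 0] by (auto simp: d_def intro!: sin_gt_zero)
    then have "0 < sin d * sin d" by simp
    then have cd1: "cos d ^ 2 < 1" using sin_squared_eq[of d] by (simp add: power2_eq_square)
    have "al \<le> a"
    proof (rule ccontr)
      assume "\<not> al \<le> a"
      then have "a^2 < al^2" using ab by (intro power_strict_mono) auto
      then have "b^2 < be^2" using albe by simp
      then have "b < be" using albe ab by (simp add: power_less_imp_less_base)
      have "1 < p^2" using \<open>a^2 < al^2\<close> ab by (simp add: p_def power_divide)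
      moreover have "1 < q^2" using \<open>b^2 < be^2\<close> ab by (simp add: q_def power_divide)
      ultimately have "cos m ^ 2 \<le> p^2 * cos m ^ 2" "sin m ^ 2 \<le> q^2 * sin m ^ 2"
        by (simp_all add: mult_le_cancel_right1)
      then have "1 \<le> p^2 * cos m ^ 2 + q^2 * sin m ^ 2" using sin_cos_squared_add[of m] by linarith
      then show False using Rm cd1 by simp
    qed
    then have "al^2 \<le> a^2" using albe by (intro power_mono) auto
    then have "be^2 \<le> b^2" using albe by linarith
    then have "be \<le> b" by (rule power2_le_imp_le) (use ab in auto)
    then show ?thesis using \<open>al \<le> a\<close> ab by (simp add: p_def q_def)
  qed
  have p0: "0 < p" "0 < q" using albe ab by (simp_all add: p_def q_def)
  define k where "k = N div 2"
  have sym: "t (j + k) = t j + pi" for j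
    unfolding k_def by (rule sym_lemma[where p=p and q=q]) (use p0 pq tt R per assms(4) in auto)
  have Psym: "P ((j + k) mod N) = - P (j mod N)" for j
    using tP[of "j+k"] tP[of j] sym[of j] by (simp add: ep_pi)
  have Osym: "outer_vertex a b N P ((i + k) mod N) = - outer_vertex a b N P i" if "i < N" for i
  proof -
    have c: "cross (P i) (P ((i+1) mod N)) \<noteq> 0" using crossP[OF that] by simp
    have m1: "((i + k) mod N + 1) mod N = ((i + 1) + k) mod N" by (simp add: mod_Suc_eq ac_simps)
    have e1: "P ((i + k) mod N) = - P i" using Psym[of i] that by simp
    have e2: "P (((i + k) mod N + 1) mod N) = - P ((i + 1) mod N)" unfolding m1 using Psym[of "i+1"] by simp
    have c': "cross (- P i) (- P ((i+1) mod N)) \<noteq> 0" using c by (simp add: cross_def)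
    have "outer_vertex a b N P ((i + k) mod N) = osol a b (- P i) (- P ((i+1) mod N))"
      unfolding outer_vertex_def e1 e2 by (rule the_outer[OF ab c'])
    also have "\<dots> = - osol a b (P i) (P ((i+1) mod N))" by (rule osol_neg)
    also have "osol a b (P i) (P ((i+1) mod N)) = outer_vertex a b N P i"
      unfolding outer_vertex_def by (rule the_outer[OF ab c, symmetric])
    finally show ?thesis .
  qed
  define W1 where "W1 i = invert (focus1 a b) (outer_vertex a b N P i)" for i
  define W2 where "W2 i = invert (focus2 a b) (outer_vertex a b N P i)" for i
  have Wsym: "W1 ((i + k) mod N) = - W2 i" if "i < N" for i
    unfolding W1_def W2_def Osym[OF that] focus_neg by (rule invert_neg)
  define g1 where "g1 j = fst (W1 j) * snd (W1 ((j + 1) mod N)) - fst (W1 ((j + 1) mod N)) * snd (W1 j)" for j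
  define g2 where "g2 j = fst (W2 j) * snd (W2 ((j + 1) mod N)) - fst (W2 ((j + 1) mod N)) * snd (W2 j)" for j
  have gg: "g1 ((i + k) mod N) = g2 i" if "i < N" for i
  proof -
    have m1: "((i + k) mod N + 1) mod N = ((i + 1) mod N + k) mod N" by (simp add: mod_Suc_eq mod_add_left_eq mod_add_right_eq ac_simps)
    have i1: "(i + 1) mod N < N" using N0 by simp
    show ?thesis unfolding g1_def g2_def m1 Wsym[OF that] Wsym[OF i1] by simp
  qed
  have "(\<Sum>i<N. g1 i) = (\<Sum>i<N. g1 ((i + k) mod N))" using sum_shift_mod[OF N0, of g1 k] by simp
  also have "\<dots> = (\<Sum>i<N. g2 i)" using gg by (intro sum.cong) auto
  finally have "(\<Sum>i<N. g1 i) = (\<Sum>i<N. g2 i)" .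
  then show ?thesis unfolding signed_area_def W1_def[symmetric] W2_def[symmetric] g1_def g2_def by simp
qed


end
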